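(* Let $p\in\mathbb{R}^9$ with $\sum_i p(i)=1$, and let $\rho=\sum_{i=1}^9\left[4p(i)-\tfrac13\right]\Pi_i$. Then $\rho$ is a pure state (a rank-one orthogonal projector) if and only if $$\sum_{i=1}^9 p(i)^2=\frac16\quad\text{and}\quad \sum_{i=1}^9 p(i)^3=\frac12\sum_{(i,j,k)\in Q}p(i)p(j)p(k).$$
   Context: Let $\omega=e^{2\pi i/3}$ and let $|0\rangle,|1\rangle,|2\rangle$ be the standard basis of $\mathbb{C}^3$. Define $X|j\rangle=|j+1 \bmod 3\rangle$ and $Z|j\rangle=\omega^j|j\rangle$. Let $|\psi_0\rangle=\frac{1}{\sqrt2}(0,1,-1)^T$. For $m,n\in\{0,1,2\}$ put $i=3m+n+1$ and let $\Pi_i$ be the orthogonal projector onto $X^mZ^n|\psi_0\rangle$ (the canonical Hesse SIC); $\rho$ is the unique trace-one Hermitian operator with $p(i)=\frac13\operatorname{Tr}(\rho\Pi_i)$. Identify the index $i=3m+n+1$ with the point $(m,n)\in\mathbb{Z}_3^2$. The 12 lines of the affine plane $\mathbb{Z}_3^2$ are $\{1,2,3\},\{4,5,6\},\{7,8,9\},\{1,4,7\},\{2,5,8\},\{3,6,9\},\{1,5,9\},\{2,6,7\},\{3,4,8\},\{1,6,8\},\{2,4,9\},\{3,5,7\}$. $Q$ denotes the set of ordered triples $(i,j,k)$ of pairwise distinct indices with $\{i,j,k\}$ one of these lines. *)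

theory Defs
  imports "HOL-Analysis.Analysis" "HOL-Library.Numeral_Type"
begin

definition idx3 :: "3 \<Rightarrow> nat" where
  "idx3 a = (if a = 0 then 0 else if a = 1 then 1 else 2)"

definition omega :: complex where
  "omega = cis (2 * pi / 3)"

definition shiftX :: "complex^3^3" where
  "shiftX = (\<chi> a b. if a = b + 1 then 1 else 0)"

definition clockZ :: "complex^3^3" where
  "clockZ = (\<chi> a b. if a = b then omega ^ idx3 a else 0)"

definition mpow :: "complex^3^3 \<Rightarrow> nat \<Rightarrow> complex^3^3" where
  "mpow A k = (((**) A) ^^ k) (mat 1)"

definition psi0 :: "complex^3" where
  "psi0 = (\<chi> a. if a = 0 then 0 else if a = 1 then 1 / sqrt 2 else - 1 / sqrt 2)"

definition conj_transpose :: "complex^3^3 \<Rightarrow> complex^3^3" where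
  "conj_transpose A = (\<chi> a b. cnj (A $ b $ a))"

definition proj_onto :: "complex^3 \<Rightarrow> complex^3^3" where
  "proj_onto v = (\<chi> a b. v $ a * cnj (v $ b) / (\<Sum>c\<in>UNIV. v $ c * cnj (v $ c)))"

text \<open>SIC vector and projector for index i = 3m+n+1, i \<in> {1..9}.\<close>
definition sic_vec :: "nat \<Rightarrow> complex^3" where
  "sic_vec i = (mpow shiftX ((i - 1) div 3) ** mpow clockZ ((i - 1) mod 3)) *v psi0"

definition Pi :: "nat \<Rightarrow> complex^3^3" where
  "Pi i = proj_onto (sic_vec i)"

definition rho_of :: "(nat \<Rightarrow> real) \<Rightarrow> complex^3^3" where
  "rho_of p = (\<Sum>i\<in>{1..9}. (4 * p i - 1/3) *\<^sub>R Pi i)"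

definition pure_state :: "complex^3^3 \<Rightarrow> bool" where
  "pure_state A \<longleftrightarrow> A ** A = A \<and> conj_transpose A = A \<and> rank A = 1"

definition lines :: "nat set set" where
  "lines = {{1,2,3},{4,5,6},{7,8,9},{1,4,7},{2,5,8},{3,6,9},{1,5,9},{2,6,7},{3,4,8},
            {1,6,8},{2,4,9},{3,5,7}}"

definition Q :: "(nat \<times> nat \<times> nat) set" where
  "Q = {(i,j,k). i \<noteq> j \<and> j \<noteq> k \<and> i \<noteq> k \<and> {i,j,k} \<in> lines}"

end

theory Submission
  imports Defs
begin


lemma mpow_Suc: "mpow A (Suc k) = A ** mpow A k"
  by (simp add: mpow_def)

lemma shiftX_nth: "shiftX $ a $ b = (if a = b + 1 then 1 else 0)"
  by (simp add: shiftX_def)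
lemma clockZ_nth: "clockZ $ a $ b = (if a = b then omega ^ idx3 a else 0)"
  by (simp add: clockZ_def)

lemma X_pow: "mpow shiftX k = (\<chi> a b. if a = b + of_nat k then 1 else 0)"
proof (induction k)
  case 0 then show ?case by (simp add: mpow_def mat_def vec_eq_iff)
next
  case (Suc k)
  have "(shiftX ** mpow shiftX k) $ a $ b = (if a = b + of_nat (Suc k) then 1 else 0)" for a b
  proof -
    have "(shiftX ** mpow shiftX k) $ a $ b = (\<Sum>c\<in>UNIV. if c = a - 1 then (if c = b + of_nat k then 1 else 0) else 0)"
      unfolding matrix_matrix_mult_def Suc shiftX_nth
      by (auto intro!: sum.cong simp: algebra_simps eq_diff_eq)
    also have "\<dots> = (if a - 1 = b + of_nat k then 1 else 0)"
      by (rule trans[OF sum.delta]) auto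
    also have "\<dots> = (if a = b + of_nat (Suc k) then 1 else 0)"
      by (simp add: eq_diff_eq algebra_simps)
    finally show ?thesis .
  qed
  then show ?case by (simp add: mpow_Suc vec_eq_iff)
qed

lemma Z_pow: "mpow clockZ k = (\<chi> a b. if a = b then omega ^ (k * idx3 a) else 0)"
proof (induction k)
  case 0 then show ?case by (simp add: mpow_def mat_def vec_eq_iff)
next
  case (Suc k)
  have "(clockZ ** mpow clockZ k) $ a $ b = (if a = b then omega ^ (Suc k * idx3 a) else 0)" for a b
  proof -
    have "(clockZ ** mpow clockZ k) $ a $ b = (\<Sum>c\<in>UNIV. if c = a then (if a = b then omega ^ idx3 a * omega ^ (k * idx3 a) else 0) else 0)"
      unfolding matrix_matrix_mult_def Suc clockZ_nth vec_lambda_beta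
      by (rule sum.cong) auto
    also have "\<dots> = (if a = b then omega ^ idx3 a * omega ^ (k * idx3 a) else 0)"
      by (rule trans[OF sum.delta]) auto
    also have "\<dots> = (if a = b then omega ^ (Suc k * idx3 a) else 0)"
      by (simp add: power_add)
    finally show ?thesis .
  qed
  then show ?case by (simp add: mpow_Suc vec_eq_iff)
qed

lemma sic_vec_nth: "sic_vec i $ a = omega ^ (((i - 1) mod 3) * idx3 (a - of_nat ((i-1) div 3))) * psi0 $ (a - of_nat ((i-1) div 3))"
proof -
  define m where "m = (i-1) div 3"
  define n where "n = (i-1) mod 3"
  have "sic_vec i $ a = (\<Sum>b\<in>UNIV. (\<Sum>c\<in>UNIV. (if a = c + of_nat m then 1 else 0) * (if c = b then omega ^ (n * idx3 c) else 0)) * psi0 $ b)"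
    unfolding sic_vec_def m_def[symmetric] n_def[symmetric] X_pow Z_pow
    by (simp add: matrix_vector_mult_def matrix_matrix_mult_def)
  also have "\<dots> = (\<Sum>b\<in>UNIV. if b = a - of_nat m then omega ^ (n * idx3 b) * psi0 $ b else 0)"
  proof (rule sum.cong)
    fix b
    have "(\<Sum>c\<in>UNIV. (if a = c + of_nat m then 1 else 0) * (if c = b then omega ^ (n * idx3 c) else 0))
       = (\<Sum>c\<in>UNIV. if c = b then (if a = b + of_nat m then omega ^ (n * idx3 b) else 0) else 0)"
      by (rule sum.cong) auto
    then show "(\<Sum>c\<in>UNIV. (if a = c + of_nat m then 1 else 0) * (if c = b then omega ^ (n * idx3 c) else 0)) * psi0 $ b
      = (if b = a - of_nat m then omega ^ (n * idx3 b) * psi0 $ b else 0)"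
      by (auto simp: eq_diff_eq)
  qed simp
  also have "\<dots> = omega ^ (n * idx3 (a - of_nat m)) * psi0 $ (a - of_nat m)" by simp
  finally show ?thesis unfolding m_def n_def .
qed

lemma omega3: "omega ^ 3 = 1"
proof -
  have "omega ^ 3 = cis (2*pi/3 + 2*pi/3 + 2*pi/3)" by (simp only: omega_def power3_eq_cube cis_mult)
  also have "2*pi/3 + 2*pi/3 + 2*pi/3 = 2 * pi" by simp
  finally show ?thesis by simp
qed

lemma omega_cnj_mult: "omega * cnj omega = 1"
    using complex_norm_square[of omega] by (simp add: omega_def)

lemma omega_cnj: "cnj omega = omega ^ 2"
proof -
  have "cnj omega * omega = 1"
    using complex_norm_square[of omega] by (simp add: omega_def mult.commute)
  then have "cnj omega = cnj omega * omega ^ 3" by (simp add: omega3)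
  also have "\<dots> = omega ^ 2" using \<open>cnj omega * omega = 1\<close>
    by (simp add: power3_eq_cube power2_eq_square mult.assoc[symmetric])
  finally show ?thesis .
qed

lemma omega_ne1: "omega \<noteq> 1"
proof
  assume "omega = 1"
  then have "Re omega = 1" by simp
  moreover have "Re omega = -1/2" unfolding omega_def by (simp add: cos_120)
  ultimately show False by simp
qed

lemma omega_eq: "omega ^ 2 + omega + 1 = 0"
proof -
  have "(omega - 1) * (omega ^ 2 + omega + 1) = omega ^ 3 - 1"
    by (simp add: algebra_simps power2_eq_square power3_eq_cube)
  then have "(omega - 1) * (omega ^ 2 + omega + 1) = 0" by (simp add: omega3)
  then show ?thesis using omega_ne1 by simp
qed

lemma sqrt2c: "complex_of_real (sqrt 2) * complex_of_real (sqrt 2) = 2"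
proof -
  have "complex_of_real (sqrt 2) * complex_of_real (sqrt 2) = complex_of_real (sqrt 2 * sqrt 2)"
    by (rule of_real_mult[symmetric])
  also have "sqrt 2 * sqrt 2 = (2::real)" by simp
  finally show ?thesis by simp
qed

definition Bm :: "nat \<Rightarrow> 3 \<Rightarrow> 3 \<Rightarrow> complex" where
  "Bm n x y = (if x = 0 \<or> y = 0 then 0 else if x = y then 1 else if x = 1 then - (omega ^ (2*n)) else - (omega ^ n))"

lemma psi_prod: "omega ^ (n * idx3 x) * psi0 $ x * cnj (omega ^ (n * idx3 y) * psi0 $ y) = Bm n x y / 2"
proof -
  have s: "complex_of_real (sqrt 2) \<noteq> 0" by simp
  have w3: "omega ^ (3 * n) = 1" by (simp add: power_mult omega3)
  have wk: "omega ^ ((3 + k) * n) = omega ^ (k * n)" for k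
  proof -
    have "omega ^ ((3 + k) * n) = omega ^ (3*n) * omega ^ (k*n)"
      by (simp add: power_add[symmetric] algebra_simps)
    then show ?thesis by (simp add: w3)
  qed
  have w6: "omega ^ (6 * n) = 1" using wk[of 3] w3 by simp
  have w5: "omega ^ (5 * n) = omega ^ (2*n)" using wk[of 2] by simp
  have w4: "omega ^ (4 * n) = omega ^ n" using wk[of 1] by simp
  have t: "(3::3) = 0" by simp
  have oc: "omega * cnj omega = 1" by (rule omega_cnj_mult)
  have f1: "omega ^ n * cnj omega ^ n = 1" using oc by (metis power_mult_distrib power_one)
  have f4: "omega ^ (n*2) * cnj omega ^ (n*2) = 1" using oc by (metis power_mult_distrib power_one)
  have f2: "omega ^ n * cnj omega ^ (n*2) = omega ^ (n*2)"
  proof -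
    have "omega ^ n * cnj omega ^ (n*2) = (omega ^ n * cnj omega ^ n) * cnj omega ^ n"
      by (simp only: mult_2_right power_add mult.assoc mult.commute mult.left_commute)
    also have "\<dots> = omega ^ (n*2)" using f1 by (simp add: omega_cnj mult.commute flip: power_mult)
    finally show ?thesis .
  qed
  have f3: "cnj omega ^ n * omega ^ (n*2) = omega ^ n"
  proof -
    have "cnj omega ^ n * omega ^ (n*2) = (omega ^ n * cnj omega ^ n) * omega ^ n"
      by (simp only: mult_2_right power_add mult.assoc mult.commute mult.left_commute)
    also have "\<dots> = omega ^ n" using f1 by simp
    finally show ?thesis .
  qed
  have x: "x = 1 \<or> x = 2 \<or> x = 0" using exhaust_3[of x] t by metis
  have y: "y = 1 \<or> y = 2 \<or> y = 0" using exhaust_3[of y] t by metis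
  show ?thesis using x y
    apply (elim disjE)
    apply (simp_all add: Bm_def psi0_def idx3_def f1 f2 f3 f4 sqrt2c algebra_simps)
    done
qed

lemma sum_shift3: "(\<Sum>c\<in>(UNIV::3 set). f (c - d)) = (\<Sum>c\<in>UNIV. f c)"
  by (rule sum.reindex_bij_witness[of _ "\<lambda>c. c + d" "\<lambda>c. c - d"]) auto

lemma sic_norm: "(\<Sum>c\<in>UNIV. sic_vec i $ c * cnj (sic_vec i $ c)) = 1"
proof -
  define m :: 3 where "m = of_nat ((i-1) div 3)"
  define n where "n = (i-1) mod 3"
  have "(\<Sum>c\<in>UNIV. sic_vec i $ c * cnj (sic_vec i $ c)) = (\<Sum>c\<in>UNIV. Bm n (c - m) (c - m) / 2)"
    unfolding sic_vec_nth m_def[symmetric] n_def[symmetric] psi_prod[symmetric]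
    by (simp add: mult.assoc)
  also have "\<dots> = (\<Sum>c\<in>UNIV. Bm n c c / 2)" by (rule sum_shift3)
  also have "\<dots> = 1" by (simp add: sum_3 Bm_def)
  finally show ?thesis .
qed

lemma Pi_nth: "Pi i $ a $ b = Bm ((i-1) mod 3) (a - of_nat ((i-1) div 3)) (b - of_nat ((i-1) div 3)) / 2"
  unfolding Pi_def proj_onto_def vec_lambda_beta sic_norm
  by (simp add: sic_vec_nth psi_prod[symmetric] mult.assoc)

lemma sum9: "(\<Sum>i\<in>{1..9::nat}. f i) = f 1 + f 2 + f 3 + f 4 + f 5 + f 6 + f 7 + f 8 + (f 9 :: 'a::comm_monoid_add)"
proof -
  have "{1..9::nat} = {1,2,3,4,5,6,7,8,9}" by auto
  then show ?thesis by (simp add: add.assoc)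
qed

lemma omega4: "omega ^ 4 = omega"
proof -
  have "omega ^ 4 = omega ^ (3 + 1)" by simp
  also have "\<dots> = omega ^ 3 * omega ^ 1" by (rule power_add)
  also have "\<dots> = omega" by (simp add: omega3)
  finally show ?thesis .
qed

lemma rho_nth: "rho_of p $ a $ b = (\<Sum>i\<in>{1..9}. complex_of_real (4 * p i - 1/3) * Bm ((i-1) mod 3) (a - of_nat ((i-1) div 3)) (b - of_nat ((i-1) div 3)) / 2)"
proof -
  have sc: "(r *\<^sub>R A) $ a $ b = complex_of_real r * A $ a $ b" for r and A :: "complex^3^3"
    unfolding vector_scaleR_component by (rule scaleR_conv_of_real)
  show ?thesis unfolding rho_of_def sum_component sc Pi_nth by (simp add: mult.assoc)
qed

definition cc :: "(nat \<Rightarrow> real) \<Rightarrow> nat \<Rightarrow> complex" where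
  "cc p i = 4 * complex_of_real (p i) - 1/3"

lemma R11: "rho_of p $ 1 $ 1 = (cc p 1 + cc p 2 + cc p 3 + cc p 7 + cc p 8 + cc p 9)/2"
  unfolding rho_nth sum9 cc_def apply (simp add: Bm_def omega4) apply (algebra)? done
lemma R22: "rho_of p $ 2 $ 2 = (cc p 1 + cc p 2 + cc p 3 + cc p 4 + cc p 5 + cc p 6)/2"
  unfolding rho_nth sum9 cc_def apply (simp add: Bm_def omega4) apply (algebra)? done
lemma R33: "rho_of p $ 3 $ 3 = (cc p 4 + cc p 5 + cc p 6 + cc p 7 + cc p 8 + cc p 9)/2"
  unfolding rho_nth sum9 cc_def apply (simp add: Bm_def omega4) apply (algebra)? done
lemma R12: "rho_of p $ 1 $ 2 = - (cc p 1 + cc p 2 * omega^2 + cc p 3 * omega)/2"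
  unfolding rho_nth sum9 cc_def apply (simp add: Bm_def omega4) apply (algebra)? done
lemma R21: "rho_of p $ 2 $ 1 = - (cc p 1 + cc p 2 * omega + cc p 3 * omega^2)/2"
  unfolding rho_nth sum9 cc_def apply (simp add: Bm_def omega4) apply (algebra)? done
lemma R13: "rho_of p $ 1 $ 3 = - (cc p 7 + cc p 8 * omega + cc p 9 * omega^2)/2"
  unfolding rho_nth sum9 cc_def apply (simp add: Bm_def omega4) apply (algebra)? done
lemma R31: "rho_of p $ 3 $ 1 = - (cc p 7 + cc p 8 * omega^2 + cc p 9 * omega)/2"
  unfolding rho_nth sum9 cc_def apply (simp add: Bm_def omega4) apply (algebra)? done
lemma R23: "rho_of p $ 2 $ 3 = - (cc p 4 + cc p 5 * omega^2 + cc p 6 * omega)/2"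
  unfolding rho_nth sum9 cc_def apply (simp add: Bm_def omega4) apply (algebra)? done
lemma R32: "rho_of p $ 3 $ 2 = - (cc p 4 + cc p 5 * omega + cc p 6 * omega^2)/2"
  unfolding rho_nth sum9 cc_def apply (simp add: Bm_def omega4) apply (algebra)? done



lemma tr2: "trace (A ** A) = A$1$1^2 + A$2$2^2 + A$3$3^2 + 2*(A$1$2*A$2$1 + A$1$3*A$3$1 + A$2$3*A$3$2)"
  for A :: "complex^3^3"
  by (simp add: trace_def matrix_matrix_mult_def sum_3 algebra_simps power2_eq_square)

lemma tr3: "trace (A ** A ** A) = A$1$1^3 + A$2$2^3 + A$3$3^3
   + 3*(A$1$1 + A$2$2)*A$1$2*A$2$1 + 3*(A$1$1 + A$3$3)*A$1$3*A$3$1 + 3*(A$2$2 + A$3$3)*A$2$3*A$3$2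
   + 3*(A$1$2*A$2$3*A$3$1 + A$1$3*A$3$2*A$2$1)"
  for A :: "complex^3^3"
  by (simp add: trace_def matrix_matrix_mult_def sum_3 algebra_simps power2_eq_square power3_eq_cube)

lemma CH: "6 * (A ** A ** A)$i$j = (6 * trace A) * (A ** A)$i$j - (3 * (trace A ^ 2 - trace (A**A))) * A$i$j
   + (trace A ^ 3 - 3 * trace A * trace (A ** A) + 2 * trace (A ** A ** A)) * (if i = j then 1 else 0)"
  for A :: "complex^3^3"
  unfolding tr2 tr3
  using exhaust_3[of i] exhaust_3[of j]
  by (elim disjE) (simp_all add: matrix_matrix_mult_def sum_3 trace_def algebra_simps power2_eq_square power3_eq_cube)


lemma n45: "(4::3) = 1" "(5::3) = 2" by simp_all

lemma ADJ: "2 * ((A ** A)$i$j - trace A * A$i$j) + (trace A ^ 2 - trace (A**A)) * (if i = j then 1 else 0)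
   = 2 * (A$(j+1)$(i+1) * A$(j+2)$(i+2) - A$(j+1)$(i+2) * A$(j+2)$(i+1))"
  for A :: "complex^3^3"
  unfolding tr2
  using exhaust_3[of i] exhaust_3[of j]
  by (elim disjE) (simp_all add: n45 matrix_matrix_mult_def sum_3 trace_def algebra_simps power2_eq_square)

lemma minors:
  fixes A :: "complex^3^3"
  assumes "A ** A = A" "trace A = 1" "trace (A ** A) = 1"
  shows "A$a$b * A$c$d = A$a$d * A$c$b"
proof -
  have M: "A$(j+1)$(i+1) * A$(j+2)$(i+2) = A$(j+1)$(i+2) * A$(j+2)$(i+1)" for i j
    using ADJ[of A i j] assms by simp
  have F: "\<forall>i j. A$(j+1)$(i+1) * A$(j+2)$(i+2) = A$(j+1)$(i+2) * A$(j+2)$(i+1)" using M by blast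
  then have F9: "A$2$2 * A$3$3 = A$2$3 * A$3$2" "A$2$3 * A$3$1 = A$2$1 * A$3$3" "A$2$1 * A$3$2 = A$2$2 * A$3$1"
    "A$3$2 * A$1$3 = A$3$3 * A$1$2" "A$3$3 * A$1$1 = A$3$1 * A$1$3" "A$3$1 * A$1$2 = A$3$2 * A$1$1"
    "A$1$2 * A$2$3 = A$1$3 * A$2$2" "A$1$3 * A$2$1 = A$1$1 * A$2$3" "A$1$1 * A$2$2 = A$1$2 * A$2$1"
    unfolding forall_3 by (simp_all add: n45)
  show ?thesis
    using exhaust_3[of a] exhaust_3[of b] exhaust_3[of c] exhaust_3[of d]
    apply (elim disjE)
    using F9 apply (simp_all add: ac_simps)
    done
qed


lemma rank1:
  fixes A :: "complex^3^3"
  assumes mn: "\<And>a b c d. A$a$b * A$c$d = A$a$d * A$c$b" and nz: "A$k$l \<noteq> 0"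
  shows "rank A = 1"
proof -
  let ?r = "row k A"
  have rowa: "row a A = (A$a$l / A$k$l) *s ?r" for a
  proof -
    have e: "A$a$b = A$a$l / A$k$l * A$k$b" for b
      using mn[of a b k l] nz by (simp add: field_simps)
    show ?thesis
    proof (subst vec_eq_iff, rule allI)
      fix b
      show "row a A $ b = ((A$a$l / A$k$l) *s ?r) $ b"
        by (simp only: row_def vector_smult_component vec_lambda_beta e[of b])
    qed
  qed
  have sub: "rows A \<subseteq> vec.span {?r}"
  proof
    fix v assume "v \<in> rows A"
    then obtain a where v: "v = row a A" unfolding rows_def by blast
    have "row a A \<in> range (\<lambda>c. c *s ?r)" unfolding rowa[of a] by (rule rangeI)
    then show "v \<in> vec.span {?r}" unfolding vec.span_singleton v .
  qed
  have B: "{?r} \<subseteq> rows A" unfolding rows_def by auto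
  have "?r $ l \<noteq> 0" using nz by (simp add: row_def)
  then have "?r \<noteq> 0" by auto
  then have ind: "vec.independent {?r}" by simp
  show ?thesis unfolding row_rank_def_gen
    using vec.dim_unique[OF B sub ind] by simp
qed

lemma mdl: "A ** (B - C) = A ** B - A ** (C :: complex^3^3)"
  by (simp add: vec_eq_iff matrix_matrix_mult_def sum_subtractf algebra_simps)
lemma mdr: "(B - C) ** A = B ** A - C ** (A :: complex^3^3)"
  by (simp add: vec_eq_iff matrix_matrix_mult_def sum_subtractf algebra_simps)

lemma herm_sq:
  fixes A :: "complex^3^3"
  assumes H: "conj_transpose A = A"
  shows "cnj ((A ** A)$b$a) = (A ** A)$a$b"
proof -
  have h: "cnj (A$x$y) = A$y$x" for x y
    using arg_cong[OF H, of "\<lambda>M. M$y$x"] by (simp add: conj_transpose_def)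
  show ?thesis by (simp add: matrix_matrix_mult_def h mult.commute)
qed

lemma pure_iff:
  fixes A :: "complex^3^3"
  assumes H: "conj_transpose A = A" and t1: "trace A = 1"
  shows "pure_state A \<longleftrightarrow> trace (A ** A) = 1 \<and> trace (A ** A ** A) = 1"
proof
  assume "pure_state A"
  then have AA: "A ** A = A" by (simp add: pure_state_def)
  then show "trace (A ** A) = 1 \<and> trace (A ** A ** A) = 1" using t1 by simp
next
  assume T: "trace (A ** A) = 1 \<and> trace (A ** A ** A) = 1"
  have h: "cnj (A$x$y) = A$y$x" for x y
    using arg_cong[OF H, of "\<lambda>M. M$y$x"] by (simp add: conj_transpose_def)
  have A3: "A ** A ** A = A ** A"
  proof -
    have "6 * (A ** A ** A)$i$j = 6 * (A ** A)$i$j" for i j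
      using CH[of A i j] T t1 by simp
    then show ?thesis by (simp add: vec_eq_iff)
  qed
  define N where "N = A ** A - A"
  have NN: "N ** N = 0"
  proof -
    have a1: "(A ** A) ** (A ** A) = A ** A" by (metis A3 matrix_mul_assoc)
    have a2: "A ** (A ** A) = A ** A" by (metis A3 matrix_mul_assoc)
    show ?thesis unfolding N_def mdl mdr a1 a2 A3 by simp
  qed
  have Nh: "N$c$a = cnj (N$a$c)" for a c
    unfolding N_def using herm_sq[OF H, of a c] h[of a c] by simp
  have N0: "N = 0"
  proof -
    have "N$a$c = 0" for a c
    proof -
      have "(N ** N)$a$a = (\<Sum>c\<in>UNIV. N$a$c * N$c$a)"
        by (simp add: matrix_matrix_mult_def)
      also have "\<dots> = (\<Sum>c\<in>UNIV. N$a$c * cnj (N$a$c))"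
        by (rule sum.cong[OF refl]) (subst Nh, rule refl)
      also have "\<dots> = complex_of_real (\<Sum>c\<in>UNIV. (norm (N$a$c))^2)"
        by (simp only: of_real_sum complex_norm_square)
      finally have X: "(N ** N)$a$a = complex_of_real (\<Sum>c\<in>UNIV. (norm (N$a$c))^2)" .
      then have "complex_of_real (\<Sum>c\<in>UNIV. (norm (N$a$c))^2) = 0" using NN by (metis zero_index)
      then have "(\<Sum>c\<in>UNIV. (norm (N$a$c))^2) = 0" by (simp only: of_real_eq_0_iff)
      then have "\<forall>c\<in>UNIV. (norm (N$a$c))^2 = 0"
        by (subst sum_nonneg_eq_0_iff[symmetric]) auto
      then show ?thesis by simp
    qed
    then show ?thesis by (simp add: vec_eq_iff)
  qed
  then have AA: "A ** A = A" unfolding N_def by simp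
  have mn: "A$a$b * A$c$d = A$a$d * A$c$b" for a b c d
    using minors[OF AA t1] T by simp
  obtain k where nz: "A$k$k \<noteq> 0"
  proof (rule ccontr)
    assume "\<not> thesis"
    then have "\<forall>k. A$k$k = 0" using that by blast
    then have "trace A = 0" by (simp add: trace_def)
    then show False using t1 by simp
  qed
  show "pure_state A"
    unfolding pure_state_def using AA H rank1[OF mn nz] by simp
qed



definition perms :: "nat \<Rightarrow> nat \<Rightarrow> nat \<Rightarrow> (nat \<times> nat \<times> nat) set" where
  "perms a b c = {(a,b,c),(a,c,b),(b,a,c),(b,c,a),(c,a,b),(c,b,a)}"

lemma perm3: "{i,j,k} = {a,b,c} \<Longrightarrow> i\<noteq>j \<Longrightarrow> j\<noteq>k \<Longrightarrow> i\<noteq>k \<Longrightarrow> (i,j,k) \<in> perms a b c"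
proof -
  assume e: "{i,j,k} = {a,b,c}" and d: "i\<noteq>j" "j\<noteq>k" "i\<noteq>k"
  have "i \<in> {a,b,c}" "j \<in> {a,b,c}" "k \<in> {a,b,c}" "a \<in> {i,j,k}" "b \<in> {i,j,k}" "c \<in> {i,j,k}"
    using e by blast+
  then show ?thesis using d unfolding perms_def by auto
qed

lemma permQ: "a\<noteq>b \<Longrightarrow> b\<noteq>c \<Longrightarrow> a\<noteq>c \<Longrightarrow> {a,b,c} \<in> lines \<Longrightarrow> perms a b c \<subseteq> Q"
  unfolding perms_def Q_def by (auto simp: insert_commute)

lemma Q_eq: "Q = perms 1 2 3 \<union> perms 4 5 6 \<union> perms 7 8 9 \<union> perms 1 4 7 \<union> perms 2 5 8 \<union> perms 3 6 9 \<union> perms 1 5 9 \<union> perms 2 6 7 \<union> perms 3 4 8 \<union> perms 1 6 8 \<union> perms 2 4 9 \<union> perms 3 5 7"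
proof
  show "Q \<subseteq> perms 1 2 3 \<union> perms 4 5 6 \<union> perms 7 8 9 \<union> perms 1 4 7 \<union> perms 2 5 8 \<union> perms 3 6 9 \<union> perms 1 5 9 \<union> perms 2 6 7 \<union> perms 3 4 8 \<union> perms 1 6 8 \<union> perms 2 4 9 \<union> perms 3 5 7"
  proof
    fix t assume "t \<in> Q"
    then obtain i j k where t: "t = (i,j,k)" "i\<noteq>j" "j\<noteq>k" "i\<noteq>k" "{i,j,k} \<in> lines"
      unfolding Q_def by auto
    from t(5) have "{i,j,k} = {1,2,3} \<or> {i,j,k} = {4,5,6} \<or> {i,j,k} = {7,8,9} \<or> {i,j,k} = {1,4,7} \<or> {i,j,k} = {2,5,8} \<or> {i,j,k} = {3,6,9} \<or> {i,j,k} = {1,5,9} \<or> {i,j,k} = {2,6,7} \<or> {i,j,k} = {3,4,8} \<or> {i,j,k} = {1,6,8} \<or> {i,j,k} = {2,4,9} \<or> {i,j,k} = {3,5,7}"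
      by (simp only: lines_def insert_iff empty_iff simp_thms)
    then show "t \<in> perms 1 2 3 \<union> perms 4 5 6 \<union> perms 7 8 9 \<union> perms 1 4 7 \<union> perms 2 5 8 \<union> perms 3 6 9 \<union> perms 1 5 9 \<union> perms 2 6 7 \<union> perms 3 4 8 \<union> perms 1 6 8 \<union> perms 2 4 9 \<union> perms 3 5 7"
      unfolding t(1) by (elim disjE) (drule perm3[OF _ t(2) t(3) t(4)], simp only: Un_iff simp_thms)+
  qed
next
  have "perms 1 2 3 \<subseteq> Q" by (rule permQ) (simp, simp, simp, simp only: lines_def insert_iff simp_thms)
  moreover have "perms 4 5 6 \<subseteq> Q" by (rule permQ) (simp, simp, simp, simp only: lines_def insert_iff simp_thms)
  moreover have "perms 7 8 9 \<subseteq> Q" by (rule permQ) (simp, simp, simp, simp only: lines_def insert_iff simp_thms)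
  moreover have "perms 1 4 7 \<subseteq> Q" by (rule permQ) (simp, simp, simp, simp only: lines_def insert_iff simp_thms)
  moreover have "perms 2 5 8 \<subseteq> Q" by (rule permQ) (simp, simp, simp, simp only: lines_def insert_iff simp_thms)
  moreover have "perms 3 6 9 \<subseteq> Q" by (rule permQ) (simp, simp, simp, simp only: lines_def insert_iff simp_thms)
  moreover have "perms 1 5 9 \<subseteq> Q" by (rule permQ) (simp, simp, simp, simp only: lines_def insert_iff simp_thms)
  moreover have "perms 2 6 7 \<subseteq> Q" by (rule permQ) (simp, simp, simp, simp only: lines_def insert_iff simp_thms)
  moreover have "perms 3 4 8 \<subseteq> Q" by (rule permQ) (simp, simp, simp, simp only: lines_def insert_iff simp_thms)
  moreover have "perms 1 6 8 \<subseteq> Q" by (rule permQ) (simp, simp, simp, simp only: lines_def insert_iff simp_thms)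
  moreover have "perms 2 4 9 \<subseteq> Q" by (rule permQ) (simp, simp, simp, simp only: lines_def insert_iff simp_thms)
  moreover have "perms 3 5 7 \<subseteq> Q" by (rule permQ) (simp, simp, simp, simp only: lines_def insert_iff simp_thms)
  ultimately have "perms 1 2 3 \<union> perms 4 5 6 \<union> perms 7 8 9 \<union> perms 1 4 7 \<union> perms 2 5 8 \<union> perms 3 6 9 \<union> perms 1 5 9 \<union> perms 2 6 7 \<union> perms 3 4 8 \<union> perms 1 6 8 \<union> perms 2 4 9 \<union> perms 3 5 7 \<subseteq> Q" by (simp only: Un_least)
  then show "perms 1 2 3 \<union> perms 4 5 6 \<union> perms 7 8 9 \<union> perms 1 4 7 \<union> perms 2 5 8 \<union> perms 3 6 9 \<union> perms 1 5 9 \<union> perms 2 6 7 \<union> perms 3 4 8 \<union> perms 1 6 8 \<union> perms 2 4 9 \<union> perms 3 5 7 \<subseteq> Q" .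
qed

lemma Q_sum: "(\<Sum>(i,j,k)\<in>Q. (p::nat\<Rightarrow>real) i * p j * p k) = 6 * (p 1 * p 2 * p 3 + p 4 * p 5 * p 6 + p 7 * p 8 * p 9 + p 1 * p 4 * p 7 + p 2 * p 5 * p 8 + p 3 * p 6 * p 9 + p 1 * p 5 * p 9 + p 2 * p 6 * p 7 + p 3 * p 4 * p 8 + p 1 * p 6 * p 8 + p 2 * p 4 * p 9 + p 3 * p 5 * p 7)"
  unfolding Q_eq perms_def by (simp flip: One_nat_def)


lemma PQ: "(a + b * omega^2 + c * omega) * (a + b * omega + c * omega^2) = a^2+b^2+c^2-a*b-b*c-a*c"
  using omega_eq by algebra

lemma TRP: "(c1 + c2 * omega^2 + c3 * omega) * (c4 + c5 * omega^2 + c6 * omega) * (c7 + c8 * omega^2 + c9 * omega)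
  + (c1 + c2 * omega + c3 * omega^2) * (c4 + c5 * omega + c6 * omega^2) * (c7 + c8 * omega + c9 * omega^2)
  = 3*(c1*c4*c7 + c2*c5*c8 + c3*c6*c9 + c1*c5*c9 + c1*c6*c8 + c2*c4*c9 + c2*c6*c7 + c3*c4*c8 + c3*c5*c7)
    - (c1+c2+c3)*(c4+c5+c6)*(c7+c8+c9)"
  using omega_eq by algebra

lemma cnj_w2: "cnj (omega^2) = omega"
proof -
  have "cnj (omega^2) = (omega^2)^2" by (simp only: complex_cnj_power omega_cnj)
  also have "\<dots> = omega^4" by (simp only: power_mult[symmetric]) simp
  also have "\<dots> = omega" by (rule omega4)
  finally show ?thesis .
qed

lemma cnj_cc: "cnj (cc p i) = cc p i"
  by (simp add: cc_def)

lemma herm: "conj_transpose (rho_of p) = rho_of p"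
proof -
  have "cnj (rho_of p $ b $ a) = rho_of p $ a $ b" for a b
    using exhaust_3[of a] exhaust_3[of b]
    by (elim disjE) (simp_all add: R11 R22 R33 R12 R21 R13 R31 R23 R32 cnj_cc omega_cnj cnj_w2 del: complex_cnj_power)
  then show ?thesis by (simp add: conj_transpose_def vec_eq_iff)
qed

lemma traces:
  fixes p :: "nat \<Rightarrow> real"
  assumes sp: "(\<Sum>i\<in>{1..9}. p i) = 1"
  shows "trace (rho_of p) = 1"
    and "trace (rho_of p ** rho_of p) = complex_of_real (12 * (\<Sum>i\<in>{1..9}. (p i)^2) - 1)"
    and "trace (rho_of p ** rho_of p ** rho_of p) =
          complex_of_real (24 * (\<Sum>i\<in>{1..9}. (p i)^3) - 12 * (\<Sum>(i,j,k)\<in>Q. p i * p j * p k) + 1)"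
proof -
  define R where "R = rho_of p"
  define x1 where "x1 = complex_of_real (p 1)"
  define x2 where "x2 = complex_of_real (p 2)"
  define x3 where "x3 = complex_of_real (p 3)"
  define x4 where "x4 = complex_of_real (p 4)"
  define x5 where "x5 = complex_of_real (p 5)"
  define x6 where "x6 = complex_of_real (p 6)"
  define x7 where "x7 = complex_of_real (p 7)"
  define x8 where "x8 = complex_of_real (p 8)"
  define x9 where "x9 = complex_of_real (p 9)"
  have sx: "x1+x2+x3+x4+x5+x6+x7+x8+x9 = 1"
  proof -
    have "p 1 + p 2 + p 3 + p 4 + p 5 + p 6 + p 7 + p 8 + p 9 = 1" using sp by (simp only: sum9)
    then have "complex_of_real (p 1 + p 2 + p 3 + p 4 + p 5 + p 6 + p 7 + p 8 + p 9) = 1" by simp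
    then show ?thesis unfolding x1_def x2_def x3_def x4_def x5_def x6_def x7_def x8_def x9_def of_real_add .
  qed
  have x9e: "x9 = 1 - (x1+x2+x3+x4+x5+x6+x7+x8)" using sx by algebra
  define c1 where "c1 = 4*x1 - 1/3"
  define c2 where "c2 = 4*x2 - 1/3"
  define c3 where "c3 = 4*x3 - 1/3"
  define c4 where "c4 = 4*x4 - 1/3"
  define c5 where "c5 = 4*x5 - 1/3"
  define c6 where "c6 = 4*x6 - 1/3"
  define c7 where "c7 = 4*x7 - 1/3"
  define c8 where "c8 = 4*x8 - 1/3"
  define c9 where "c9 = 4*x9 - 1/3"
  have cc: "cc p 1 = c1" "cc p 2 = c2" "cc p 3 = c3" "cc p 4 = c4" "cc p 5 = c5" "cc p 6 = c6"
     "cc p 7 = c7" "cc p 8 = c8" "cc p 9 = c9"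
    by (simp_all add: cc_def c1_def c2_def c3_def c4_def c5_def c6_def c7_def c8_def c9_def
       x1_def x2_def x3_def x4_def x5_def x6_def x7_def x8_def x9_def)
  define P0 where "P0 = c1 + c2 * omega^2 + c3 * omega"
  define Q0 where "Q0 = c1 + c2 * omega + c3 * omega^2"
  define P1 where "P1 = c4 + c5 * omega^2 + c6 * omega"
  define Q1 where "Q1 = c4 + c5 * omega + c6 * omega^2"
  define P2 where "P2 = c7 + c8 * omega^2 + c9 * omega"
  define Q2 where "Q2 = c7 + c8 * omega + c9 * omega^2"
  define d1 where "d1 = (c1 + c2 + c3 + c7 + c8 + c9)/2"
  define d2 where "d2 = (c1 + c2 + c3 + c4 + c5 + c6)/2"
  define d3 where "d3 = (c4 + c5 + c6 + c7 + c8 + c9)/2"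
  have e: "R$1$1 = d1" "R$2$2 = d2" "R$3$3 = d3" "R$1$2 = -P0/2" "R$2$1 = -Q0/2"
    "R$1$3 = -Q2/2" "R$3$1 = -P2/2" "R$2$3 = -P1/2" "R$3$2 = -Q1/2"
    unfolding R_def R11 R22 R33 R12 R21 R13 R31 R23 R32 cc d1_def d2_def d3_def
      P0_def Q0_def P1_def Q1_def P2_def Q2_def by simp_all
  have pq: "P0*Q0 = c1^2+c2^2+c3^2-c1*c2-c2*c3-c1*c3"
    "P1*Q1 = c4^2+c5^2+c6^2-c4*c5-c5*c6-c4*c6"
    "P2*Q2 = c7^2+c8^2+c9^2-c7*c8-c8*c9-c7*c9"
    unfolding P0_def Q0_def P1_def Q1_def P2_def Q2_def by (rule PQ)+
  have trp: "P0*P1*P2 + Q0*Q1*Q2 = 3*(c1*c4*c7 + c2*c5*c8 + c3*c6*c9 + c1*c5*c9 + c1*c6*c8 + c2*c4*c9 + c2*c6*c7 + c3*c4*c8 + c3*c5*c7)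
    - (c1+c2+c3)*(c4+c5+c6)*(c7+c8+c9)"
    unfolding P0_def Q0_def P1_def Q1_def P2_def Q2_def by (rule TRP)
  show "trace (rho_of p) = 1"
  proof -
    have "trace R = d1 + d2 + d3" by (simp add: trace_def sum_3 e)
    also have "\<dots> = 1" unfolding d1_def d2_def d3_def c1_def c2_def c3_def c4_def c5_def c6_def c7_def c8_def c9_def x9e
      by algebra
    finally show ?thesis unfolding R_def .
  qed
  show "trace (rho_of p ** rho_of p) = complex_of_real (12 * (\<Sum>i\<in>{1..9}. (p i)^2) - 1)"
  proof -
    have "trace (R ** R) = d1^2 + d2^2 + d3^2 + (P0*Q0 + P1*Q1 + P2*Q2)/2"
      unfolding tr2 e by (simp add: field_simps power2_eq_square)
    also have "\<dots> = 12*(x1^2+x2^2+x3^2+x4^2+x5^2+x6^2+x7^2+x8^2+x9^2) - 1"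
      unfolding pq d1_def d2_def d3_def c1_def c2_def c3_def c4_def c5_def c6_def c7_def c8_def c9_def x9e
      by algebra
    also have "\<dots> = complex_of_real (12 * (\<Sum>i\<in>{1..9}. (p i)^2) - 1)"
      unfolding sum9 by (simp add: x1_def x2_def x3_def x4_def x5_def x6_def x7_def x8_def x9_def)
    finally show ?thesis unfolding R_def .
  qed
  show "trace (rho_of p ** rho_of p ** rho_of p) =
          complex_of_real (24 * (\<Sum>i\<in>{1..9}. (p i)^3) - 12 * (\<Sum>(i,j,k)\<in>Q. p i * p j * p k) + 1)"
  proof -
    have "trace (R ** R ** R) = d1^3 + d2^3 + d3^3 + 3*(d1+d2)*(P0*Q0)/4 + 3*(d1+d3)*(P2*Q2)/4
       + 3*(d2+d3)*(P1*Q1)/4 - 3*(P0*P1*P2 + Q0*Q1*Q2)/8"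
      unfolding tr3 e by (simp add: field_simps power2_eq_square power3_eq_cube)
    also have "\<dots> = 24*(x1^3+x2^3+x3^3+x4^3+x5^3+x6^3+x7^3+x8^3+x9^3)
       - 72*(x1*x2*x3 + x4*x5*x6 + x7*x8*x9 + x1*x4*x7 + x2*x5*x8 + x3*x6*x9 + x1*x5*x9 + x2*x6*x7
             + x3*x4*x8 + x1*x6*x8 + x2*x4*x9 + x3*x5*x7) + 1"
      unfolding pq trp d1_def d2_def d3_def c1_def c2_def c3_def c4_def c5_def c6_def c7_def c8_def c9_def x9e
      by algebra
    also have "\<dots> = complex_of_real (24 * (\<Sum>i\<in>{1..9}. (p i)^3) - 12 * (\<Sum>(i,j,k)\<in>Q. p i * p j * p k) + 1)"
      unfolding sum9 Q_sum by (simp add: x1_def x2_def x3_def x4_def x5_def x6_def x7_def x8_def x9_def)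
    finally show ?thesis unfolding R_def .
  qed
qed


lemma real_final: "((12 * a - 1 :: real) = 1 \<and> 24 * b - 12 * c + 1 = (1::real)) \<longleftrightarrow> (a = 1/6 \<and> b = 1/2 * c)"
  by auto

theorem mainTheorem4:
  fixes p :: "nat \<Rightarrow> real"
  assumes "(\<Sum>i\<in>{1..9}. p i) = 1"
  shows "pure_state (rho_of p) \<longleftrightarrow>
    ((\<Sum>i\<in>{1..9}. (p i)^2) = 1/6 \<and>
     (\<Sum>i\<in>{1..9}. (p i)^3) = 1/2 * (\<Sum>(i,j,k)\<in>Q. p i * p j * p k))"
proof -
  have "pure_state (rho_of p) \<longleftrightarrow> trace (rho_of p ** rho_of p) = 1 \<and> trace (rho_of p ** rho_of p ** rho_of p) = 1"
    by (rule pure_iff[OF herm traces(1)[OF assms]])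
  also have "\<dots> \<longleftrightarrow> (12 * (\<Sum>i\<in>{1..9}. (p i)^2) - 1 = 1 \<and>
      24 * (\<Sum>i\<in>{1..9}. (p i)^3) - 12 * (\<Sum>(i,j,k)\<in>Q. p i * p j * p k) + 1 = 1)"
    unfolding traces(2)[OF assms] traces(3)[OF assms] of_real_eq_1_iff ..
  also have "\<dots> \<longleftrightarrow> ((\<Sum>i\<in>{1..9}. (p i)^2) = 1/6 \<and>
     (\<Sum>i\<in>{1..9}. (p i)^3) = 1/2 * (\<Sum>(i,j,k)\<in>Q. p i * p j * p k))"
    by (rule real_final)
  finally show ?thesis .
qed

end
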